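(* Let $\mu_n>0$ satisfy $\mu_n\to 0$ and $n^{1/2}\mu_n\to\mathfrak m$ with $0\le\mathfrak m\le\infty$. Let $\theta_n\in\mathbb R$ be a sequence of true parameters. (i) Suppose $0\le\mathfrak m<\infty$ and $n^{1/2}\theta_n\to\nu\in\mathbb R\cup\{-\infty,\infty\}$. Then $$\lim_{n\to\infty}P_{n,\theta_n}(\hat\theta_A=0)=\Phi(-\nu+\mathfrak m)-\Phi(-\nu-\mathfrak m).$$ (ii) Suppose $\mathfrak m=\infty$ and $\theta_n/\mu_n\to\zeta\in\mathbb R\cup\{-\infty,\infty\}$. Then: 1. if $|\zeta|<1$, then $\lim_{n}P_{n,\theta_n}(\hat\theta_A=0)=1$; 2. if $|\zeta|=1$ and $n^{1/2}(\mu_n-\zeta\theta_n)\to r\in\mathbb R\cup\{-\infty,\infty\}$, then $\lim_nP_{n,\theta_n}(\hat\theta_A=0)=\Phi(r)$; 3. if $|\zeta|>1$, then $\lim_nP_{n,\theta_n}(\hat\theta_A=0)=0$.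
   Context: Gaussian location model: for each sample size $n$, $y_1,\dots,y_n$ are i.i.d. $N(\theta,1)$ with $\theta\in\mathbb R$ unknown; $\bar y$ is their mean. $P_{n,\theta}$ denotes the probability governing a sample of size $n$ when $\theta$ is the true parameter. Given a nonrandom tuning parameter $\mu_n>0$, the adaptive LASSO estimator is $$\hat\theta_A=\bar y(1-\mu_n^2/\bar y^2)_+=\begin{cases}0,&|\bar y|\le\mu_n,\\ \bar y-\mu_n^2/\bar y,&|\bar y|>\mu_n.\end{cases}$$ $\Phi$ denotes the standard normal cdf, with $\Phi(\infty)=1$, $\Phi(-\infty)=0$. *)

theory Defs
  imports "HOL-Probability.Probability"
begin

definition Phi :: "real \<Rightarrow> real" where
  "Phi x = measure (density lborel std_normal_density) {..x}"

definition Phi_ext :: "ereal \<Rightarrow> real" where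
  "Phi_ext z = (case z of ereal x \<Rightarrow> Phi x | PInfty \<Rightarrow> 1 | MInfty \<Rightarrow> 0)"

definition sample_dist :: "nat \<Rightarrow> real \<Rightarrow> (nat \<Rightarrow> real) measure" where
  "sample_dist n \<theta> = PiM {..<n} (\<lambda>_. density lborel (normal_density \<theta> 1))"

definition sample_mean :: "nat \<Rightarrow> (nat \<Rightarrow> real) \<Rightarrow> real" where
  "sample_mean n y = (\<Sum>i<n. y i) / real n"

definition adaptive_lasso :: "real \<Rightarrow> real \<Rightarrow> real" where
  "adaptive_lasso \<mu> yb = (if \<bar>yb\<bar> \<le> \<mu> then 0 else yb - \<mu>\<^sup>2 / yb)"

definition prob_zero :: "nat \<Rightarrow> real \<Rightarrow> real \<Rightarrow> real" where
  "prob_zero n \<mu> \<theta> = measure (sample_dist n \<theta>)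
     {y \<in> space (sample_dist n \<theta>). adaptive_lasso \<mu> (sample_mean n y) = 0}"

end

theory Submission
  imports Defs "HOL-Analysis.Analysis"
begin
abbreviation "N \<equiv> density lborel std_normal_density"

lemma N_real_distribution: "real_distribution N"
proof -
  interpret prob_space N using prob_space_normal_density by simp
  show ?thesis by unfold_locales simp
qed

lemma Phi_cdf: "Phi = cdf N"
  by (simp add: Phi_def[abs_def] cdf_def)

lemma N_singleton: "measure N {x} = 0"
proof -
  have "{x} \<in> null_sets N"
  proof (subst null_sets_density_iff)
    show "{x} \<in> sets lborel \<and> (AE y in lborel. y \<in> {x} \<longrightarrow> ennreal (std_normal_density y) = 0)"
      using eventually_mono[OF AE_lborel_singleton[of x], of "\<lambda>y. y \<in> {x} \<longrightarrow> ennreal (std_normal_density y) = 0"] by simp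
  qed simp
  then show ?thesis by (simp add: measure_def emeasure_notin_sets null_setsD1)
qed

lemma Phi_cont: "isCont Phi x"
  unfolding Phi_cdf using finite_borel_measure.isCont_cdf[OF real_distribution.finite_borel_measure_M[OF N_real_distribution]] N_singleton by simp

lemma Phi_top: "(Phi \<longlongrightarrow> 1) at_top"
  unfolding Phi_cdf using real_distribution.cdf_lim_at_top_prob[OF N_real_distribution] .

lemma Phi_bot: "(Phi \<longlongrightarrow> 0) at_bot"
  unfolding Phi_cdf using finite_borel_measure.cdf_lim_at_bot[OF real_distribution.finite_borel_measure_M[OF N_real_distribution]] .

lemma Phi_ext_tendsto:
  assumes "(\<lambda>n. ereal (x n)) \<longlonglongrightarrow> z"
  shows "(\<lambda>n. Phi (x n)) \<longlonglongrightarrow> Phi_ext z"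
proof (cases z)
  case (real r)
  then have "x \<longlonglongrightarrow> r" using assms by simp
  then show ?thesis using real Phi_cont isCont_tendsto_compose by (simp add: Phi_ext_def) blast
next
  case PInf
  then have "filterlim x at_top sequentially" using assms tendsto_PInfty_eq_at_top by auto
  then show ?thesis using PInf Phi_top filterlim_compose by (simp add: Phi_ext_def) blast
next
  case MInf
  then have "filterlim x at_bot sequentially" using assms ereal_tendsto_simps2(3)[of x] by (auto simp: o_def)
  then show ?thesis using MInf Phi_bot filterlim_compose by (simp add: Phi_ext_def) blast
qed




lemma sample_prob_space: "prob_space (sample_dist n \<theta>)"
  unfolding sample_dist_def
  by (intro prob_space_PiM prob_space_normal_density) auto

lemma sample_component:
  assumes "i < n"
  shows "distributed (sample_dist n \<theta>) lborel (\<lambda>y. y i) (normal_density \<theta> 1)"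
proof -
  interpret prob_space "sample_dist n \<theta>" by (rule sample_prob_space)
  have "distr (sample_dist n \<theta>) lborel (\<lambda>y. y i) = distr (sample_dist n \<theta>) (density lborel (normal_density \<theta> 1)) (\<lambda>y. y i)"
    by (rule distr_cong) auto
  also have "\<dots> = density lborel (normal_density \<theta> 1)"
    unfolding sample_dist_def using assms
    by (intro distr_PiM_component prob_space_normal_density) auto
  finally show ?thesis
    unfolding distributed_def using assms
    by (auto simp: sample_dist_def)
qed

lemma sample_indep:
  assumes "n > 0"
  shows "prob_space.indep_vars (sample_dist n \<theta>) (\<lambda>i. borel) (\<lambda>i y. y i) {..<n}"
proof -
  interpret prob_space "sample_dist n \<theta>" by (rule sample_prob_space)
  have rv: "random_variable borel (\<lambda>y. y i)" if "i \<in> {..<n}" for i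
    using that by (auto simp: sample_dist_def)
  show ?thesis
  proof (subst indep_vars_iff_distr_eq_PiM'[OF _ rv])
    show "{..<n} \<noteq> {}" using assms by auto
    have "distr (sample_dist n \<theta>) (Pi\<^sub>M {..<n} (\<lambda>i. borel)) (\<lambda>x. restrict (\<lambda>i. x i) {..<n})
        = distr (sample_dist n \<theta>) (sample_dist n \<theta>) (\<lambda>x. x)"
      by (rule distr_cong) (auto simp: sample_dist_def space_PiM PiE_def extensional_def intro!: sets_PiM_cong)
    also have "\<dots> = sample_dist n \<theta>" by simp
    also have "\<dots> = Pi\<^sub>M {..<n} (\<lambda>i. distr (sample_dist n \<theta>) borel (\<lambda>y. y i))"
      unfolding sample_dist_def
    proof (rule PiM_cong)
      fix i assume "i \<in> {..<n}"
      have "distr (PiM {..<n} (\<lambda>_. density lborel (normal_density \<theta> 1))) borel (\<lambda>y. y i)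
          = distr (PiM {..<n} (\<lambda>_. density lborel (normal_density \<theta> 1))) (density lborel (normal_density \<theta> 1)) (\<lambda>y. y i)"
        by (rule distr_cong) auto
      also have "\<dots> = density lborel (normal_density \<theta> 1)"
        using \<open>i \<in> {..<n}\<close> by (intro distr_PiM_component prob_space_normal_density) auto
      finally show "density lborel (normal_density \<theta> 1) = distr (PiM {..<n} (\<lambda>_. density lborel (normal_density \<theta> 1))) borel (\<lambda>y. y i)" by simp
    qed simp
    finally show "distr (sample_dist n \<theta>) (Pi\<^sub>M {..<n} (\<lambda>i. borel)) (\<lambda>x. restrict (\<lambda>i. x i) {..<n})
        = Pi\<^sub>M {..<n} (\<lambda>i. distr (sample_dist n \<theta>) borel (\<lambda>y. y i))" .
  qed
qed




lemma sample_std: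
  assumes "n > 0"
  shows "distributed (sample_dist n \<theta>) lborel (\<lambda>y. (sample_mean n y - \<theta>) * sqrt (real n)) std_normal_density"
proof -
  interpret prob_space "sample_dist n \<theta>" by (rule sample_prob_space)
  have "distributed (sample_dist n \<theta>) lborel (\<lambda>y. \<Sum>i\<in>{..<n}. y i)
      (normal_density (\<Sum>i\<in>{..<n}. \<theta>) (sqrt (\<Sum>i\<in>{..<n}. 1\<^sup>2)))"
    using assms by (intro sum_indep_normal sample_indep sample_component) auto
  then have "distributed (sample_dist n \<theta>) lborel (\<lambda>y. \<Sum>i\<in>{..<n}. y i)
      (normal_density (real n * \<theta>) (sqrt (real n)))" by simp
  then have "distributed (sample_dist n \<theta>) lborel (\<lambda>y. ((\<Sum>i\<in>{..<n}. y i) - real n * \<theta>) / sqrt (real n)) std_normal_density"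
    using normal_standard_normal_convert[of "sqrt (real n)"] assms by simp
  moreover have "(\<lambda>y. ((\<Sum>i\<in>{..<n}. y i) - real n * \<theta>) / sqrt (real n)) = (\<lambda>y. (sample_mean n y - \<theta>) * sqrt (real n))"
  proof
    fix y
    have s: "sqrt (real n) * sqrt (real n) = real n" using assms by simp
    have "sqrt (real n) > 0" using assms by simp
    then show "((\<Sum>i\<in>{..<n}. y i) - real n * \<theta>) / sqrt (real n) = (sample_mean n y - \<theta>) * sqrt (real n)"
      using assms s unfolding sample_mean_def by (simp add: field_simps)
  qed
  ultimately show ?thesis by simp
qed

lemma lasso_zero_iff: "\<mu> > 0 \<Longrightarrow> adaptive_lasso \<mu> x = 0 \<longleftrightarrow> \<bar>x\<bar> \<le> \<mu>"
proof -
  assume "\<mu> > 0"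
  { assume "\<bar>x\<bar> > \<mu>" "x - \<mu>\<^sup>2 / x = 0"
    then have "x \<noteq> 0" using \<open>\<mu> > 0\<close> by auto
    then have "x * x = \<mu>\<^sup>2" using \<open>x - \<mu>\<^sup>2 / x = 0\<close> by (simp add: field_simps power2_eq_square)
    then have "\<bar>x\<bar> = \<mu>" using \<open>\<mu> > 0\<close>
      by (metis abs_of_pos power2_eq_square real_sqrt_abs real_sqrt_mult_self)
    then have False using \<open>\<bar>x\<bar> > \<mu>\<close> by simp }
  then show ?thesis unfolding adaptive_lasso_def using \<open>\<mu> > 0\<close> by force
qed

lemma N_interval: "a \<le> b \<Longrightarrow> measure N {a..b} = Phi b - Phi a"
proof -
  assume ab: "a \<le> b"
  interpret real_distribution N by (rule N_real_distribution)
  show ?thesis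
  proof (cases "a = b")
    case True then show ?thesis using N_singleton by simp
  next
    case False
    then have ab': "a < b" using ab by simp
    have "{a..b} = {a} \<union> {a<..b}" using ab by auto
    then have "measure N {a..b} = measure N ({a} \<union> {a<..b})" by simp
    also have "\<dots> = measure N {a} + measure N {a<..b}"
      by (rule finite_measure_Union) auto
    also have "\<dots> = Phi b - Phi a"
      using cdf_diff_eq[OF ab'] N_singleton Phi_cdf by simp
    finally show ?thesis .
  qed
qed

lemma prob_zero_formula:
  assumes n: "n > 0" and mu: "\<mu> > 0"
  shows "prob_zero n \<mu> \<theta> = Phi (sqrt (real n) * (\<mu> - \<theta>)) - Phi (sqrt (real n) * (- \<mu> - \<theta>))"
proof -
  let ?M = "sample_dist n \<theta>"
  let ?Z = "\<lambda>y. (sample_mean n y - \<theta>) * sqrt (real n)"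
  interpret prob_space ?M by (rule sample_prob_space)
  have D: "distributed ?M lborel ?Z std_normal_density" using sample_std[OF n] .
  have sn: "sqrt (real n) > 0" using n by simp
  have "{y \<in> space ?M. adaptive_lasso \<mu> (sample_mean n y) = 0}
      = ?Z -` {sqrt (real n) * (- \<mu> - \<theta>) .. sqrt (real n) * (\<mu> - \<theta>)} \<inter> space ?M"
  proof -
    have "\<And>y. \<bar>sample_mean n y\<bar> \<le> \<mu> \<longleftrightarrow>
       sqrt (real n) * (- \<mu> - \<theta>) \<le> ?Z y \<and> ?Z y \<le> sqrt (real n) * (\<mu> - \<theta>)"
      using sn by (auto simp: abs_le_iff mult.commute[of "sqrt (real n)"])
    then show ?thesis using lasso_zero_iff[OF mu] by auto
  qed
  then have "prob_zero n \<mu> \<theta> = measure ?M (?Z -` {sqrt (real n) * (- \<mu> - \<theta>) .. sqrt (real n) * (\<mu> - \<theta>)} \<inter> space ?M)"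
    unfolding prob_zero_def by simp
  also have "\<dots> = measure (distr ?M lborel ?Z) {sqrt (real n) * (- \<mu> - \<theta>) .. sqrt (real n) * (\<mu> - \<theta>)}"
    using distributed_measurable[OF D] by (subst measure_distr) auto
  also have "\<dots> = measure N {sqrt (real n) * (- \<mu> - \<theta>) .. sqrt (real n) * (\<mu> - \<theta>)}"
    using distributed_distr_eq_density[OF D] by simp
  also have "\<dots> = Phi (sqrt (real n) * (\<mu> - \<theta>)) - Phi (sqrt (real n) * (- \<mu> - \<theta>))"
    using sn mu by (intro N_interval) (simp add: mult_left_mono)
  finally show ?thesis .
qed




lemma N_uminus: "distr N lborel uminus = N"
proof -
  interpret real_distribution N by (rule N_real_distribution)
  have "distributed N lborel (\<lambda>x. x) std_normal_density"
    unfolding distributed_def by (simp add: distr_id2)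
  from normal_density_affine[OF this, of "-1" 0]
  have "distributed N lborel (\<lambda>x. - x) std_normal_density" by simp
  then show ?thesis by (rule distributed_distr_eq_density)
qed

lemma Phi_neg: "Phi (- x) = 1 - Phi x"
proof -
  interpret real_distribution N by (rule N_real_distribution)
  have "Phi (-x) = measure (distr N lborel uminus) {..-x}"
    using N_uminus Phi_def by simp
  also have "\<dots> = measure N {x..}"
    by (subst measure_distr) (auto intro!: arg_cong[where f="measure N"])
  also have "\<dots> = 1 - measure N {..<x}"
  proof -
    have "{x..} = UNIV - {..<x}" by auto
    then show ?thesis using prob_compl[of "{..<x}"] by simp
  qed
  also have "measure N {..<x} = Phi x"
  proof -
    have "{..x} = {..<x} \<union> {x}" by auto
    then have "measure N {..x} = measure N ({..<x} \<union> {x})" by simp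
    also have "\<dots> = measure N {..<x} + measure N {x}"
      by (rule finite_measure_Union) auto
    finally have "measure N {..x} = measure N {..<x} + measure N {x}" .
    then show ?thesis using N_singleton Phi_def by simp
  qed
  finally show ?thesis .
qed

lemma Phi_ext_neg: "Phi_ext (- r) = 1 - Phi_ext r"
  by (cases r) (auto simp: Phi_ext_def Phi_neg)




lemma main_lim:
  fixes \<mu> \<theta> :: "nat \<Rightarrow> real"
  assumes pos: "\<And>n. \<mu> n > 0"
  assumes A: "(\<lambda>n. ereal (sqrt (real n) * (\<mu> n - \<theta> n))) \<longlonglongrightarrow> A"
  assumes B: "(\<lambda>n. ereal (sqrt (real n) * (- \<mu> n - \<theta> n))) \<longlonglongrightarrow> B"
  shows "(\<lambda>n. prob_zero n (\<mu> n) (\<theta> n)) \<longlonglongrightarrow> Phi_ext A - Phi_ext B"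
proof -
  have "(\<lambda>n. Phi (sqrt (real n) * (\<mu> n - \<theta> n)) - Phi (sqrt (real n) * (- \<mu> n - \<theta> n))) \<longlonglongrightarrow> Phi_ext A - Phi_ext B"
    by (intro tendsto_diff Phi_ext_tendsto A B)
  moreover have "eventually (\<lambda>n. Phi (sqrt (real n) * (\<mu> n - \<theta> n)) - Phi (sqrt (real n) * (- \<mu> n - \<theta> n)) = prob_zero n (\<mu> n) (\<theta> n)) sequentially"
    using eventually_gt_at_top[of "0::nat"]
    by eventually_elim (simp add: prob_zero_formula pos)
  ultimately show ?thesis by (rule Lim_transform_eventually)
qed

lemma lim_prod1:
  fixes s q :: "nat \<Rightarrow> real"
  assumes "(\<lambda>n. ereal (s n)) \<longlonglongrightarrow> \<infinity>" "(\<lambda>n. ereal (q n)) \<longlonglongrightarrow> \<zeta>" "\<zeta> \<noteq> 1"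
  shows "(\<lambda>n. ereal (s n * (1 - q n))) \<longlonglongrightarrow> \<infinity> * (1 - \<zeta>)"
proof -
  have "(\<lambda>n. 1 - ereal (q n)) \<longlonglongrightarrow> 1 - \<zeta>"
    by (intro tendsto_diff_ereal_general assms tendsto_const) auto
  moreover have "1 - \<zeta> \<noteq> 0" using assms(3)
    by (cases \<zeta>) (auto simp: one_ereal_def)
  ultimately have "(\<lambda>n. ereal (s n) * (1 - ereal (q n))) \<longlonglongrightarrow> \<infinity> * (1 - \<zeta>)"
    by (intro tendsto_mult_ereal assms) auto
  moreover have "\<And>n. ereal (s n) * (1 - ereal (q n)) = ereal (s n * (1 - q n))"
    by (simp add: one_ereal_def)
  ultimately show ?thesis by simp
qed

lemma lim_prod2:
  fixes s q :: "nat \<Rightarrow> real"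
  assumes "(\<lambda>n. ereal (s n)) \<longlonglongrightarrow> \<infinity>" "(\<lambda>n. ereal (q n)) \<longlonglongrightarrow> \<zeta>" "\<zeta> \<noteq> -1"
  shows "(\<lambda>n. ereal (- (s n * (1 + q n)))) \<longlonglongrightarrow> - (\<infinity> * (1 + \<zeta>))"
proof -
  have "(\<lambda>n. ereal (- q n)) \<longlonglongrightarrow> - \<zeta>"
    using tendsto_uminus_ereal[OF assms(2)] by simp
  moreover have "- \<zeta> \<noteq> 1" using assms(3) by (cases \<zeta>) (auto simp: one_ereal_def)
  ultimately have "(\<lambda>n. ereal (s n * (1 - - q n))) \<longlonglongrightarrow> \<infinity> * (1 - - \<zeta>)"
    using lim_prod1[OF assms(1), of "\<lambda>n. - q n" "- \<zeta>"] by simp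
  then have "(\<lambda>n. - ereal (s n * (1 - - q n))) \<longlonglongrightarrow> - (\<infinity> * (1 - - \<zeta>))"
    by (rule tendsto_uminus_ereal)
  moreover have "1 - - \<zeta> = 1 + \<zeta>" by (cases \<zeta>) (auto simp: one_ereal_def)
  ultimately show ?thesis by simp
qed




theorem proposition1:
  fixes \<mu> \<theta> :: "nat \<Rightarrow> real" and m :: ereal
  assumes pos: "\<And>n. \<mu> n > 0"
    and mu0: "\<mu> \<longlonglongrightarrow> 0"
    and mlim: "(\<lambda>n. ereal (sqrt (real n) * \<mu> n)) \<longlonglongrightarrow> m"
    and m_nonneg: "0 \<le> m"
  shows
    "(m \<noteq> \<infinity> \<longrightarrow> (\<forall>\<nu>::ereal.
        (\<lambda>n. ereal (sqrt (real n) * \<theta> n)) \<longlonglongrightarrow> \<nu> \<longrightarrow>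
        (\<lambda>n. prob_zero n (\<mu> n) (\<theta> n)) \<longlonglongrightarrow> Phi_ext (- \<nu> + m) - Phi_ext (- \<nu> - m)))
     \<and>
     (m = \<infinity> \<longrightarrow> (\<forall>\<zeta>::ereal.
        (\<lambda>n. ereal (\<theta> n / \<mu> n)) \<longlonglongrightarrow> \<zeta> \<longrightarrow>
          (\<bar>\<zeta>\<bar> < 1 \<longrightarrow> (\<lambda>n. prob_zero n (\<mu> n) (\<theta> n)) \<longlonglongrightarrow> 1)
        \<and> (\<bar>\<zeta>\<bar> = 1 \<longrightarrow> (\<forall>r::ereal.
              (\<lambda>n. ereal (sqrt (real n) * (\<mu> n - real_of_ereal \<zeta> * \<theta> n))) \<longlonglongrightarrow> r \<longrightarrow>
              (\<lambda>n. prob_zero n (\<mu> n) (\<theta> n)) \<longlonglongrightarrow> Phi_ext r))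
        \<and> (\<bar>\<zeta>\<bar> > 1 \<longrightarrow> (\<lambda>n. prob_zero n (\<mu> n) (\<theta> n)) \<longlonglongrightarrow> 0)))"
proof (intro conjI impI allI)
  fix \<nu> :: ereal
  assume mfin: "m \<noteq> \<infinity>"
  assume th: "(\<lambda>n. ereal (sqrt (real n) * \<theta> n)) \<longlonglongrightarrow> \<nu>"
  have mminf: "m \<noteq> - \<infinity>" using m_nonneg by auto
  have "(\<lambda>n. ereal (sqrt (real n) * \<mu> n) - ereal (sqrt (real n) * \<theta> n)) \<longlonglongrightarrow> m - \<nu>"
    using mfin mminf by (intro tendsto_diff_ereal_general mlim th) auto
  then have A: "(\<lambda>n. ereal (sqrt (real n) * (\<mu> n - \<theta> n))) \<longlonglongrightarrow> m - \<nu>"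
    by (simp add: right_diff_distrib)
  have "(\<lambda>n. - ereal (sqrt (real n) * \<mu> n) - ereal (sqrt (real n) * \<theta> n)) \<longlonglongrightarrow> - m - \<nu>"
  proof -
    have nm: "- m \<noteq> \<infinity>" "- m \<noteq> - \<infinity>" using mfin mminf by (cases m; simp)+
    show ?thesis using nm by (intro tendsto_diff_ereal_general tendsto_uminus_ereal mlim th) auto
  qed
  then have B: "(\<lambda>n. ereal (sqrt (real n) * (- \<mu> n - \<theta> n))) \<longlonglongrightarrow> - m - \<nu>"
    by (simp add: right_diff_distrib)
  have e1: "m - \<nu> = - \<nu> + m" and e2: "- m - \<nu> = - \<nu> - m"
    using mfin mminf by (cases m; cases \<nu>; simp)+
  show "(\<lambda>n. prob_zero n (\<mu> n) (\<theta> n)) \<longlonglongrightarrow> Phi_ext (- \<nu> + m) - Phi_ext (- \<nu> - m)"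
    using main_lim[OF pos A B] e1 e2 by simp
next
  fix \<zeta> :: ereal
  assume minf: "m = \<infinity>"
  assume q: "(\<lambda>n. ereal (\<theta> n / \<mu> n)) \<longlonglongrightarrow> \<zeta>"
  define s where "s n = sqrt (real n) * \<mu> n" for n
  have s: "(\<lambda>n. ereal (s n)) \<longlonglongrightarrow> \<infinity>" using mlim minf by (simp add: s_def)
  have ra: "sqrt (real n) * (\<mu> n - \<theta> n) = s n * (1 - \<theta> n / \<mu> n)" for n
    using pos[of n] by (simp add: s_def field_simps)
  have rb: "sqrt (real n) * (- \<mu> n - \<theta> n) = - (s n * (1 + \<theta> n / \<mu> n))" for n
    using pos[of n] by (simp add: s_def field_simps)
  have LA: "\<zeta> \<noteq> 1 \<Longrightarrow> (\<lambda>n. ereal (sqrt (real n) * (\<mu> n - \<theta> n))) \<longlonglongrightarrow> \<infinity> * (1 - \<zeta>)"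
    unfolding ra by (rule lim_prod1[OF s q])
  have LB: "\<zeta> \<noteq> -1 \<Longrightarrow> (\<lambda>n. ereal (sqrt (real n) * (- \<mu> n - \<theta> n))) \<longlonglongrightarrow> - (\<infinity> * (1 + \<zeta>))"
    unfolding rb by (rule lim_prod2[OF s q])
  {
    assume z: "\<bar>\<zeta>\<bar> < 1"
    then have "\<zeta> \<noteq> 1" "\<zeta> \<noteq> -1" by auto
    from main_lim[OF pos LA[OF this(1)] LB[OF this(2)]]
    have "(\<lambda>n. prob_zero n (\<mu> n) (\<theta> n)) \<longlonglongrightarrow> Phi_ext (\<infinity> * (1 - \<zeta>)) - Phi_ext (- (\<infinity> * (1 + \<zeta>)))" .
    moreover have "Phi_ext (\<infinity> * (1 - \<zeta>)) - Phi_ext (- (\<infinity> * (1 + \<zeta>))) = 1"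
      using z by (cases \<zeta>) (auto simp: one_ereal_def Phi_ext_def)
    ultimately show "(\<lambda>n. prob_zero n (\<mu> n) (\<theta> n)) \<longlonglongrightarrow> 1" by simp
  }
  {
    assume z: "\<bar>\<zeta>\<bar> > 1"
    then have "\<zeta> \<noteq> 1" "\<zeta> \<noteq> -1" by auto
    from main_lim[OF pos LA[OF this(1)] LB[OF this(2)]]
    have "(\<lambda>n. prob_zero n (\<mu> n) (\<theta> n)) \<longlonglongrightarrow> Phi_ext (\<infinity> * (1 - \<zeta>)) - Phi_ext (- (\<infinity> * (1 + \<zeta>)))" .
    moreover have "Phi_ext (\<infinity> * (1 - \<zeta>)) - Phi_ext (- (\<infinity> * (1 + \<zeta>))) = 0"
      using z by (cases \<zeta>) (auto simp: one_ereal_def Phi_ext_def)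
    ultimately show "(\<lambda>n. prob_zero n (\<mu> n) (\<theta> n)) \<longlonglongrightarrow> 0" by simp
  }
  fix r :: ereal
  assume z: "\<bar>\<zeta>\<bar> = 1"
  assume rl: "(\<lambda>n. ereal (sqrt (real n) * (\<mu> n - real_of_ereal \<zeta> * \<theta> n))) \<longlonglongrightarrow> r"
  from z have "\<zeta> = 1 \<or> \<zeta> = -1" by (cases \<zeta>) (auto simp: one_ereal_def abs_if split: if_splits)
  then show "(\<lambda>n. prob_zero n (\<mu> n) (\<theta> n)) \<longlonglongrightarrow> Phi_ext r"
  proof
    assume z1: "\<zeta> = 1"
    then have A: "(\<lambda>n. ereal (sqrt (real n) * (\<mu> n - \<theta> n))) \<longlonglongrightarrow> r" using rl by simp
    have "\<zeta> \<noteq> -1" using z1 by (simp add: one_ereal_def)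
    from main_lim[OF pos A LB[OF this]] z1
    have "(\<lambda>n. prob_zero n (\<mu> n) (\<theta> n)) \<longlonglongrightarrow> Phi_ext r - Phi_ext (- (\<infinity> * (1 + 1)))" by simp
    then show ?thesis by (simp add: Phi_ext_def one_ereal_def)
  next
    assume z1: "\<zeta> = -1"
    then have "(\<lambda>n. ereal (sqrt (real n) * (\<mu> n + \<theta> n))) \<longlonglongrightarrow> r" using rl by simp
    then have "(\<lambda>n. - ereal (sqrt (real n) * (\<mu> n + \<theta> n))) \<longlonglongrightarrow> - r" by (rule tendsto_uminus_ereal)
    then have B: "(\<lambda>n. ereal (sqrt (real n) * (- \<mu> n - \<theta> n))) \<longlonglongrightarrow> - r" by (simp add: algebra_simps)
    have "\<zeta> \<noteq> 1" using z1 by (simp add: one_ereal_def)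
    from main_lim[OF pos LA[OF this] B] z1
    have "(\<lambda>n. prob_zero n (\<mu> n) (\<theta> n)) \<longlonglongrightarrow> Phi_ext (\<infinity> * (1 - - 1)) - Phi_ext (- r)" by simp
    moreover have "Phi_ext (\<infinity> * (1 - - 1)) = 1" by (simp add: Phi_ext_def one_ereal_def)
    ultimately show ?thesis by (simp add: Phi_ext_neg)
  qed
qed


end
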